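(* In the top-$k$ allocation setting, the audit policy \textsc{uniform-k} is $\varepsilon^*$-DSIC where $\varepsilon^*$ is the smallest $\varepsilon$ for which some audit policy with budget $B$ is $\varepsilon$-DSIC; i.e. \textsc{uniform-k} is an optimal audit policy under the dominant-strategy incentive compatibility criterion.
   Context: Model: there are $n$ agents. Agent $i$ has a true type $\mathbf{a}_i=(\mathbf{x}_i,\mathbf{z}_i)$, where $\mathbf{x}_i$ is a known (verifiable) partial type and $\mathbf{z}_i\in I^s$ is a self-reported partial type. Agent $i$ reports $\mathbf{a}_i'=(\mathbf{x}_i,\mathbf{z}_i')$. In the top-$k$ allocation setting, resources go to the $k$ agents with the highest reported scores under a score function $f$; $\alpha_i(f,\mathcal{A}')\in\{0,1\}$ indicates allocation to agent $i$ given reports $\mathcal{A}'$. An audit policy maps each set of reports $\mathcal{A}'$ to probabilities $\phi_i(\mathcal{A}')\in[0,1]$ with $\sum_i\phi_i(\mathcal{A}')\le B$. An audited liar loses the resource and pays penalty $c\ge0$: a lying agent's utility is $\alpha_i(f,\mathcal{A}')(1-\phi_i(\mathcal{A}'))-c\,\phi_i(\mathcal{A}')$, a truthful agent's utility is $\alpha_i(f,\mathcal{A})$. A policy $\phi$ is $\varepsilon$-DSIC if for every agent $i$, every true type $\mathbf{a}_i$, every report $\mathbf{a}_i'$ with the same known part $\mathbf{x}_i$, and every profile of other agents' reports $\mathcal{A}'_{-i}$, the expected utility (over the randomness of auditing) of reporting truthfully is at least the expected utility of reporting $\mathbf{a}_i'$ minus $\varepsilon$. The policy \textsc{uniform-k}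 audits each agent among the $k$ highest-scoring reports in $\mathcal{A}'$ with probability $\min(1,B/k)$ and audits no other agent. *)

theory Defs
  imports Complex_Main "HOL-Library.FuncSet"
begin

text \<open>A type is a pair (x, z): x is the known
 (verifiable) partial type, z the self-reported partial type, a real vector in I^s
 represented as a list of length s with entries in I.\<close>

definition self_types :: "real set \<Rightarrow> nat \<Rightarrow> real list set" where
  "self_types I s = {z. length z = s \<and> set z \<subseteq> I}"

definition profiles :: "nat \<Rightarrow> real set \<Rightarrow> nat \<Rightarrow> (nat \<Rightarrow> 'x \<times> real list) set" where
  "profiles n I s = ({..<n} \<rightarrow>\<^sub>E (UNIV \<times> self_types I s))"

definition score :: "('x \<Rightarrow> real list \<Rightarrow> real) \<Rightarrow> (nat \<Rightarrow> 'x \<times> real list) \<Rightarrow> nat \<Rightarrow> real" where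
  "score f A j = f (fst (A j)) (snd (A j))"

definition in_top_k :: "nat \<Rightarrow> nat \<Rightarrow> ('x \<Rightarrow> real list \<Rightarrow> real) \<Rightarrow> (nat \<Rightarrow> 'x \<times> real list) \<Rightarrow> nat \<Rightarrow> bool" where
  "in_top_k n k f A i \<longleftrightarrow> i < n \<and>
     card {j \<in> {..<n}. j \<noteq> i \<and> (score f A j > score f A i \<or> (score f A j = score f A i \<and> j < i))} < k"

definition alloc :: "nat \<Rightarrow> nat \<Rightarrow> ('x \<Rightarrow> real list \<Rightarrow> real) \<Rightarrow> (nat \<Rightarrow> 'x \<times> real list) \<Rightarrow> nat \<Rightarrow> real" where
  "alloc n k f A i = (if in_top_k n k f A i then 1 else 0)"

type_synonym 'x policy = "(nat \<Rightarrow> 'x \<times> real list) \<Rightarrow> nat \<Rightarrow> real"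

definition budget_ok :: "nat \<Rightarrow> real set \<Rightarrow> nat \<Rightarrow> real \<Rightarrow> 'x policy \<Rightarrow> bool" where
  "budget_ok n I s B \<phi> \<longleftrightarrow> (\<forall>A \<in> profiles n I s.
      (\<forall>i<n. 0 \<le> \<phi> A i \<and> \<phi> A i \<le> 1) \<and> (\<Sum>i<n. \<phi> A i) \<le> B)"

text \<open>Expected utility of agent i with true profile A (A i the true type, the other
 entries the other agents' reports) when it reports z'.\<close>
definition utility :: "nat \<Rightarrow> nat \<Rightarrow> ('x \<Rightarrow> real list \<Rightarrow> real) \<Rightarrow> real \<Rightarrow> 'x policy
    \<Rightarrow> (nat \<Rightarrow> 'x \<times> real list) \<Rightarrow> nat \<Rightarrow> real list \<Rightarrow> real" where
  "utility n k f c \<phi> A i z' =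
     (if z' = snd (A i) then alloc n k f A i
      else (let A' = A(i := (fst (A i), z')) in
            alloc n k f A' i * (1 - \<phi> A' i) - c * \<phi> A' i))"

definition eps_DSIC :: "nat \<Rightarrow> nat \<Rightarrow> real set \<Rightarrow> nat \<Rightarrow> ('x \<Rightarrow> real list \<Rightarrow> real) \<Rightarrow> real
    \<Rightarrow> 'x policy \<Rightarrow> real \<Rightarrow> bool" where
  "eps_DSIC n k I s f c \<phi> \<epsilon> \<longleftrightarrow>
     (\<forall>A \<in> profiles n I s. \<forall>i<n. \<forall>z' \<in> self_types I s.
        utility n k f c \<phi> A i (snd (A i)) \<ge> utility n k f c \<phi> A i z' - \<epsilon>)"

definition uniform_k :: "nat \<Rightarrow> nat \<Rightarrow> ('x \<Rightarrow> real list \<Rightarrow> real) \<Rightarrow> real \<Rightarrow> 'x policy" where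
  "uniform_k n k f B A i = (if in_top_k n k f A i then min 1 (B / real k) else 0)"

end

theory Submission
  imports Defs
begin

lemma topk_card:
  "card {i\<in>{..<n}. in_top_k n k f A i} \<le> k"
proof (rule ccontr)
  define T where "T = {i\<in>{..<n}. in_top_k n k f A i}"
  define sc where "sc = score f A"
  assume "\<not> card {i\<in>{..<n}. in_top_k n k f A i} \<le> k"
  hence cT: "card T > k" unfolding T_def by simp
  have fT: "finite T" unfolding T_def by simp
  hence neT: "T \<noteq> {}" using cT by auto
  define S0 where "S0 = Min (sc ` T)"
  define M where "M = {i\<in>T. sc i = S0}"
  have "S0 \<in> sc ` T" unfolding S0_def using fT neT by simp
  hence neM: "M \<noteq> {}" unfolding M_def by auto
  have fM: "finite M" unfolding M_def using fT by simp
  define m where "m = Max M"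
  have mM: "m \<in> M" unfolding m_def using fM neM by simp
  hence mT: "m \<in> T" and scm: "sc m = S0" unfolding M_def by auto
  have lt: "card {j \<in> {..<n}. j \<noteq> m \<and> (score f A j > score f A m \<or> (score f A j = score f A m \<and> j < m))} < k"
    using mT unfolding T_def in_top_k_def by auto
  have sub: "T - {m} \<subseteq> {j \<in> {..<n}. j \<noteq> m \<and> (score f A j > score f A m \<or> (score f A j = score f A m \<and> j < m))}"
  proof
    fix j assume j: "j \<in> T - {m}"
    have jn: "j < n" using j unfolding T_def by auto
    have "S0 \<le> sc j" unfolding S0_def using fT j by simp
    moreover have "sc j = S0 \<Longrightarrow> j < m"
    proof -
      assume "sc j = S0"
      hence "j \<in> M" using j unfolding M_def by auto
      hence "j \<le> m" unfolding m_def using fM by simp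
      thus "j < m" using j by auto
    qed
    ultimately show "j \<in> {j \<in> {..<n}. j \<noteq> m \<and> (score f A j > score f A m \<or> (score f A j = score f A m \<and> j < m))}"
      using jn j scm unfolding sc_def by force
  qed
  have "card (T - {m}) \<le> card {j \<in> {..<n}. j \<noteq> m \<and> (score f A j > score f A m \<or> (score f A j = score f A m \<and> j < m))}"
    by (rule card_mono) (simp, rule sub)
  moreover have "card (T - {m}) = card T - 1" using mT fT by simp
  ultimately show False using lt cT by linarith
qed

lemma sum_indicator_topk:
  "(\<Sum>i<n. (if in_top_k n k f A i then p else 0)) = p * real (card {i\<in>{..<n}. in_top_k n k f A i})"
proof -
  have "(\<Sum>i<n. (if in_top_k n k f A i then p else 0)) = (\<Sum>i\<in>{i\<in>{..<n}. in_top_k n k f A i}. p)"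
    by (simp add: sum.inter_filter[symmetric])
  thus ?thesis by simp
qed

lemma uniform_budget:
  assumes "k \<ge> 1" "B \<ge> 0"
  shows "budget_ok n I s B (uniform_k n k f B)"
  unfolding budget_ok_def
proof (intro ballI conjI allI impI)
  fix A i
  show "0 \<le> uniform_k n k f B A i" unfolding uniform_k_def using assms by auto
  show "uniform_k n k f B A i \<le> 1" unfolding uniform_k_def using assms by auto
next
  fix A
  define p where "p = min 1 (B / real k)"
  have "(\<Sum>i<n. uniform_k n k f B A i) = p * real (card {i\<in>{..<n}. in_top_k n k f A i})"
    unfolding uniform_k_def p_def by (rule sum_indicator_topk)
  also have "\<dots> \<le> p * real k"
    using topk_card[of n k f A] assms unfolding p_def by (intro mult_left_mono) auto
  also have "\<dots> \<le> B/ real k * real k" using assms unfolding p_def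
    by (intro mult_right_mono) auto
  also have "\<dots> = B" using assms by simp
  finally show "(\<Sum>i<n. uniform_k n k f B A i) \<le> B" .
qed

lemma uniform_gain:
  assumes "k \<ge> 1" "B \<ge> 0" "c \<ge> 0"
  defines "p \<equiv> min 1 (B / real k)"
  shows "utility n k f c (uniform_k n k f B) A i z' - utility n k f c (uniform_k n k f B) A i (snd (A i))
          \<le> max 0 (1 - p * (1 + c))"
    and "utility n k f c (uniform_k n k f B) A i z' - utility n k f c (uniform_k n k f B) A i (snd (A i)) > 0
        \<Longrightarrow> z' \<noteq> snd (A i) \<and> \<not> in_top_k n k f A i \<and> in_top_k n k f (A(i := (fst (A i), z'))) i"
proof -
  have p0: "p \<ge> 0" "p \<le> 1" unfolding p_def using assms by auto
  have "c * p \<ge> 0" using p0 assms by simp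
  hence pc: "\<not> p + c * p < 0" using p0 by linarith
  then show "utility n k f c (uniform_k n k f B) A i z' - utility n k f c (uniform_k n k f B) A i (snd (A i))
          \<le> max 0 (1 - p * (1 + c))"
    unfolding utility_def uniform_k_def alloc_def Let_def p_def[symmetric]
    by (auto simp: algebra_simps)
  show "utility n k f c (uniform_k n k f B) A i z' - utility n k f c (uniform_k n k f B) A i (snd (A i)) > 0
        \<Longrightarrow> z' \<noteq> snd (A i) \<and> \<not> in_top_k n k f A i \<and> in_top_k n k f (A(i := (fst (A i), z'))) i"
    using p0 assms pc
    unfolding utility_def uniform_k_def alloc_def Let_def p_def[symmetric]
    by (auto simp: algebra_simps split: if_splits)
qed

lemma lower_bound:
  assumes k1: "k \<ge> 1" and B0: "B \<ge> 0" and c0: "c \<ge> 0"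
    and A: "A \<in> profiles n I s" and i: "i < n" and z': "z' \<in> self_types I s"
    and nt: "\<not> in_top_k n k f A i" and t': "in_top_k n k f (A(i := (fst (A i), z'))) i"
    and bud: "budget_ok n I s B \<phi>" and ds: "eps_DSIC n k I s f c \<phi> \<epsilon>"
  shows "\<epsilon> \<ge> 1 - min 1 (B / real k) * (1 + c)"
proof -
  define xi where "xi = fst (A i)"
  define zi where "zi = snd (A i)"
  define A' where "A' = A(i := (xi, z'))"
  have zi: "zi \<in> self_types I s" using A i unfolding zi_def profiles_def by (force simp: PiE_iff mem_Times_iff)
  define sa where "sa = f xi zi"
  define sb where "sb = f xi z'"
  define Sa where "Sa = {j \<in> {..<n}. j \<noteq> i \<and> (score f A j > score f A i \<or> (score f A j = score f A i \<and> j < i))}"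
  define Sb where "Sb = {j \<in> {..<n}. j \<noteq> i \<and> (score f A' j > score f A' i \<or> (score f A' j = score f A' i \<and> j < i))}"
  have scA: "score f A i = sa" unfolding score_def sa_def xi_def zi_def by simp
  have scA': "score f A' i = sb" unfolding score_def sb_def A'_def by simp
  have scO: "j \<noteq> i \<Longrightarrow> score f A' j = score f A j" for j unfolding score_def A'_def by simp
  have cSa: "\<not> card Sa < k" using nt i unfolding in_top_k_def Sa_def by auto
  have cSb: "card Sb < k" using t' unfolding in_top_k_def Sb_def A'_def xi_def by auto
  have lt: "sa < sb"
  proof (rule ccontr)
    assume "\<not> sa < sb"
    hence "Sa \<subseteq> Sb" unfolding Sa_def Sb_def using scA scA' scO by force
    hence "card Sa \<le> card Sb" unfolding Sb_def by (intro card_mono) auto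
    thus False using cSa cSb by linarith
  qed
  have "Sa \<subseteq> {..<n} - {i}" unfolding Sa_def by auto
  hence "card Sa \<le> card ({..<n} - {i})" by (intro card_mono) auto
  also have "\<dots> = n - 1" using i by simp
  finally have nk: "n \<ge> k + 1" using cSa i by linarith
  define P where "P = (\<lambda>j. if j < n then (xi, z') else undefined)"
  have P: "P \<in> profiles n I s" unfolding profiles_def P_def using z' by (auto simp: PiE_iff extensional_def)
  have scP: "j < n \<Longrightarrow> score f P j = sb" for j unfolding score_def P_def sb_def by simp
  have topP: "in_top_k n k f P j" if "j < k" for j
  proof -
    have "{l \<in> {..<n}. l \<noteq> j \<and> (score f P l > score f P j \<or> (score f P l = score f P j \<and> l < j))} = {..<j}"
      using that nk scP by auto
    thus ?thesis unfolding in_top_k_def using that nk by simp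
  qed
  have bP: "\<forall>j<n. 0 \<le> \<phi> P j \<and> \<phi> P j \<le> 1" "(\<Sum>j<n. \<phi> P j) \<le> B"
    using bud P unfolding budget_ok_def by auto
  obtain j where j: "j < k" "\<phi> P j \<le> B / real k"
  proof (rule ccontr)
    assume "\<not> thesis"
    with that have all: "\<forall>j<k. \<phi> P j > B / real k" by force
    have "(\<Sum>j<k. B / real k) < (\<Sum>j<k. \<phi> P j)"
      using k1 all by (intro sum_strict_mono) (auto simp: lessThan_empty_iff)
    also have "\<dots> \<le> (\<Sum>j<n. \<phi> P j)"
      using bP(1) nk by (intro sum_mono2) auto
    finally show False using bP(2) k1 by simp
  qed
  have jn: "j < n" using j nk by simp
  have pj: "\<phi> P j \<le> min 1 (B / real k)" "\<phi> P j \<ge> 0" using j bP(1) jn by auto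
  define Q where "Q = P(j := (xi, zi))"
  have Q: "Q \<in> profiles n I s" using P zi jn unfolding profiles_def Q_def by (auto simp: PiE_iff extensional_def)
  have QP: "Q(j := (fst (Q j), z')) = P" unfolding Q_def P_def using jn by (auto simp: fun_eq_iff)
  have ntQ: "\<not> in_top_k n k f Q j"
  proof -
    have scQ: "score f Q j = sa" unfolding Q_def score_def sa_def by simp
    have "{l \<in> {..<n}. l \<noteq> j \<and> (score f Q l > score f Q j \<or> (score f Q l = score f Q j \<and> l < j))} = {..<n} - {j}"
      using scQ scP lt unfolding Q_def score_def by auto
    moreover have "card ({..<n} - {j}) = n - 1" using jn by simp
    ultimately show ?thesis unfolding in_top_k_def using nk by (simp; linarith)
  qed
  have "utility n k f c \<phi> Q j (snd (Q j)) \<ge> utility n k f c \<phi> Q j z' - \<epsilon>"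
    using ds Q jn z' unfolding eps_DSIC_def by blast
  moreover have "snd (Q j) = zi" unfolding Q_def by simp
  moreover have "z' \<noteq> zi" using lt unfolding sa_def sb_def by auto
  ultimately have "0 \<ge> (1 - \<phi> P j) - c * \<phi> P j - \<epsilon>"
    using ntQ topP[OF j(1)] QP unfolding utility_def alloc_def Let_def by simp
  moreover have "c * \<phi> P j \<le> c * min 1 (B / real k)" using pj c0 by (intro mult_left_mono) auto
  ultimately show ?thesis using pj by (simp add: algebra_simps) (smt (verit))
qed

theorem mainTheorem6:
  fixes n k s :: nat and I :: "real set" and f :: "'x \<Rightarrow> real list \<Rightarrow> real"
    and B c :: real
  assumes "k \<ge> 1" and "B \<ge> 0" and "c \<ge> 0"
  shows "budget_ok n I s B (uniform_k n k f B)
    \<and> eps_DSIC n k I s f c (uniform_k n k f B)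
        (Inf {\<epsilon>. \<exists>\<phi>::'x policy. budget_ok n I s B \<phi> \<and> eps_DSIC n k I s f c \<phi> \<epsilon>})"
proof -
  define G where "G = 1 - min 1 (B / real k) * (1 + c)"
  define S where "S = {\<epsilon>. \<exists>\<phi>::'x policy. budget_ok n I s B \<phi> \<and> eps_DSIC n k I s f c \<phi> \<epsilon>}"
  have bu: "budget_ok n I s B (uniform_k n k f B)" using uniform_budget assms by blast
  have du: "eps_DSIC n k I s f c (uniform_k n k f B) (max 0 G)"
    unfolding eps_DSIC_def G_def using uniform_gain(1)[OF assms] by (smt (verit))
  have Sne: "max 0 G \<in> S" unfolding S_def using bu du by blast
  have "eps_DSIC n k I s f c (uniform_k n k f B) (Inf S)"
    unfolding eps_DSIC_def
  proof (intro ballI allI impI)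
    fix A :: "nat \<Rightarrow> 'x \<times> real list" and i z' assume A: "A \<in> profiles n I s" and i: "i < n" and z': "z' \<in> self_types I s"
    have zA: "snd (A i) \<in> self_types I s" using A i unfolding profiles_def by (force simp: PiE_iff mem_Times_iff)
    have S0: "\<epsilon> \<ge> 0" if "\<epsilon> \<in> S" for \<epsilon>
    proof -
      from that obtain \<phi> :: "'x policy" where "eps_DSIC n k I s f c \<phi> \<epsilon>" unfolding S_def by blast
      hence "utility n k f c \<phi> A i (snd (A i)) \<ge> utility n k f c \<phi> A i (snd (A i)) - \<epsilon>"
        using A i zA unfolding eps_DSIC_def by blast
      thus ?thesis by simp
    qed
    have I0: "Inf S \<ge> 0" using Sne S0 by (intro cInf_greatest) auto
    define g where "g = utility n k f c (uniform_k n k f B) A i z' - utility n k f c (uniform_k n k f B) A i (snd (A i))"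
    have "g \<le> Inf S"
    proof (cases "g > 0")
      case False thus ?thesis using I0 by simp
    next
      case True
      hence h: "\<not> in_top_k n k f A i" "in_top_k n k f (A(i := (fst (A i), z'))) i"
        using uniform_gain(2)[OF assms] unfolding g_def by blast+
      have "g \<le> G" using uniform_gain(1)[OF assms, of n f A i z'] True unfolding g_def G_def by simp
      moreover have "G \<le> Inf S"
      proof (rule cInf_greatest)
        show "S \<noteq> {}" using Sne by auto
        fix e assume "e \<in> S"
        then obtain \<phi> :: "'x policy" where "budget_ok n I s B \<phi>" "eps_DSIC n k I s f c \<phi> e"
          unfolding S_def by blast
        thus "G \<le> e" unfolding G_def using lower_bound[OF assms A i z' h] by blast
      qed
      ultimately show ?thesis by simp
    qed
    thus "utility n k f c (uniform_k n k f B) A i (snd (A i)) \<ge> utility n k f c (uniform_k n k f B) A i z' - Inf S"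
      unfolding g_def by simp
  qed
  thus ?thesis using bu unfolding S_def by blast
qed

end
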